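(* Let $\mathcal I$ be a canonical instance with groups $G_1,\dots,G_k$ and group weights $w_1>\cdots>w_k$, group sizes $n_1,\dots,n_k$, $W_i=n_iw_i$, and define $L_1=0$ and $L_r=\frac{\sum_{j<r}W_j}{w_r}$ for $r=2,\dots,k$. Then for every agent $a_{i,j}$, every $r\in[k]$ and every item $e_h$ with $h>L_r$, we have $v_{i,j}(e_h)\le w_r$.
   Context: Chore-allocation instance: agents, a finite set $\mathcal M=\{e_1,\dots,e_m\}$ of indivisible items, positive weights, additive cost functions $v:2^{\mathcal M}\to\mathbb R_{\ge0}$. The weighted maximin share of agent $a$ with weight $w_a$ and cost $v_a$ is $\mathsf{WMMS}_a=w_a\min_{\text{allocations }(B_b)_b}\max_{b}\frac{v_a(B_b)}{w_b}$, where allocations are ordered partitions of $\mathcal M$ into one (possibly empty) bundle per agent. An instance is canonical if: (i) $\max$ weight is $w_1$, weights sum to $1$, and every weight equals $w_1/2^p$ for some nonnegative integer $p$; (ii) every agent's total cost $v(\mathcal M)=1$, and every single-item cost is either $0$ or $w_1/2^p$ for some nonnegative integer $p$; (iii) every agent has $v(e_1)\ge\cdots\ge v(e_m)$; (iv) every agent's $\mathsf{WMMS}$ equals her weight. Agents are partitioned into groups $G_1,\dots,G_k$ by weight, all agents of $G_i$ having weight $w_i$, with $w_1>w_2>\cdots>w_k$; $G_i=\{a_{i,1},\dots,a_{i,n_i}\}$ and $v_{i,j}$ is the cost function of $a_{i,j}$. *)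

theory Defs
  imports Complex_Main "HOL-Library.FuncSet"
begin

text \<open>Agents are a finite set N of type 'a; items are e_1,...,e_m, represented by {1..m}.
  w a is the weight of agent a, v a e the cost of item e for agent a; bundle_of costs are additive.\<close>

definition cost :: "('a \<Rightarrow> nat \<Rightarrow> real) \<Rightarrow> 'a \<Rightarrow> nat set \<Rightarrow> real" where
  "cost v a S = (\<Sum>e\<in>S. v a e)"

definition allocations :: "'a set \<Rightarrow> nat \<Rightarrow> (nat \<Rightarrow> 'a) set" where
  "allocations N m = PiE {1..m} (\<lambda>_. N)"

definition bundle_of :: "nat \<Rightarrow> (nat \<Rightarrow> 'a) \<Rightarrow> 'a \<Rightarrow> nat set" where
  "bundle_of m f b = {e \<in> {1..m}. f e = b}"

definition WMMS :: "'a set \<Rightarrow> nat \<Rightarrow> ('a \<Rightarrow> real) \<Rightarrow> ('a \<Rightarrow> nat \<Rightarrow> real) \<Rightarrow> 'a \<Rightarrow> real" where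
  "WMMS N m w v a = w a * Min ((\<lambda>f. Max ((\<lambda>b. cost v a (bundle_of m f b) / w b) ` N)) ` allocations N m)"

definition canonical :: "'a set \<Rightarrow> nat \<Rightarrow> ('a \<Rightarrow> real) \<Rightarrow> ('a \<Rightarrow> nat \<Rightarrow> real) \<Rightarrow> bool" where
  "canonical N m w v \<longleftrightarrow>
     finite N \<and> N \<noteq> {} \<and> (\<forall>a\<in>N. w a > 0) \<and>
     (\<Sum>a\<in>N. w a) = 1 \<and>
     (\<forall>a\<in>N. \<exists>p::nat. w a = Max (w ` N) / 2 ^ p) \<and>
     (\<forall>a\<in>N. cost v a {1..m} = 1) \<and>
     (\<forall>a\<in>N. \<forall>e\<in>{1..m}. v a e = 0 \<or> (\<exists>p::nat. v a e = Max (w ` N) / 2 ^ p)) \<and>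
     (\<forall>a\<in>N. \<forall>e\<in>{1..m}. \<forall>e'\<in>{1..m}. e \<le> e' \<longrightarrow> v a e' \<le> v a e) \<and>
     (\<forall>a\<in>N. WMMS N m w v a = w a)"

text \<open>Group weights w_1 > ... > w_k, 0-indexed here: gw N w 0 is the largest weight.\<close>
definition gw :: "'a set \<Rightarrow> ('a \<Rightarrow> real) \<Rightarrow> nat \<Rightarrow> real" where
  "gw N w r = rev (sorted_list_of_set (w ` N)) ! r"

definition ngroups :: "'a set \<Rightarrow> ('a \<Rightarrow> real) \<Rightarrow> nat" where
  "ngroups N w = card (w ` N)"

definition gsize :: "'a set \<Rightarrow> ('a \<Rightarrow> real) \<Rightarrow> nat \<Rightarrow> nat" where
  "gsize N w r = card {a\<in>N. w a = gw N w r}"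

definition gW :: "'a set \<Rightarrow> ('a \<Rightarrow> real) \<Rightarrow> nat \<Rightarrow> real" where
  "gW N w r = real (gsize N w r) * gw N w r"

definition Lbound :: "'a set \<Rightarrow> ('a \<Rightarrow> real) \<Rightarrow> nat \<Rightarrow> real" where
  "Lbound N w r = (if r = 0 then 0 else (\<Sum>j<r. gW N w j) / gw N w r)"

end

theory Submission
  imports Defs
begin

lemma gw_facts:
  assumes fin: "finite N" and r: "r < ngroups N w"
  shows "gw N w r \<in> w ` N"
    and "{x \<in> w ` N. x > gw N w r} = (\<lambda>j. gw N w j) ` {..<r}"
    and "inj_on (\<lambda>j. gw N w j) {..<r}"
proof -
  define ws where "ws = rev (sorted_list_of_set (w ` N))"
  have fW: "finite (w ` N)" using fin by simp
  have len: "length ws = ngroups N w" unfolding ws_def ngroups_def using fW by simp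
  have setws: "set ws = w ` N" unfolding ws_def using fW by simp
  have ss: "sorted_wrt (>) ws" unfolding ws_def
    using strict_sorted_list_of_set[of "w ` N"] by (simp add: sorted_wrt_rev)
  have dist: "distinct ws" unfolding ws_def by simp
  have gw: "\<And>j. gw N w j = ws ! j" unfolding gw_def ws_def by simp
  have lt: "\<And>i j. i < j \<Longrightarrow> j < length ws \<Longrightarrow> ws ! i > ws ! j"
    using ss by (simp add: sorted_wrt_iff_nth_less)
  show "gw N w r \<in> w ` N" using r len setws gw by (metis nth_mem)
  show "{x \<in> w ` N. x > gw N w r} = (\<lambda>j. gw N w j) ` {..<r}"
  proof
    show "{x \<in> w ` N. x > gw N w r} \<subseteq> (\<lambda>j. gw N w j) ` {..<r}"
    proof
      fix x assume "x \<in> {x \<in> w ` N. x > gw N w r}"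
      then have x: "x \<in> set ws" "x > ws ! r" using setws gw by auto
      then obtain j where j: "j < length ws" "x = ws ! j" by (metis in_set_conv_nth)
      have "j < r"
      proof (rule ccontr)
        assume "\<not> j < r"
        then have "j = r \<or> r < j" by auto
        then show False using lt[of r j] j x r len by auto
      qed
      then show "x \<in> (\<lambda>j. gw N w j) ` {..<r}" using j gw by auto
    qed
    show "(\<lambda>j. gw N w j) ` {..<r} \<subseteq> {x \<in> w ` N. x > gw N w r}"
      using lt r len setws gw by (auto intro!: nth_mem)
  qed
  show "inj_on (\<lambda>j. gw N w j) {..<r}"
    using dist r len gw by (auto simp: inj_on_def nth_eq_iff_index_eq)
qed

theorem mainTheorem7:
  fixes N :: "'a set" and m :: nat and w :: "'a \<Rightarrow> real" and v :: "'a \<Rightarrow> nat \<Rightarrow> real"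
  assumes "canonical N m w v"
    and "a \<in> N"
    and "r < ngroups N w"
    and "h \<in> {1..m}"
    and "real h > Lbound N w r"
  shows "v a h \<le> gw N w r"
proof (rule ccontr)
  assume neg: "\<not> v a h \<le> gw N w r"
  note c = assms(1)[unfolded canonical_def]
  have fin: "finite N" and ne: "N \<noteq> {}" and wpos: "\<And>b. b \<in> N \<Longrightarrow> w b > 0" using c by auto
  have "Max (w ` N) \<in> w ` N" using fin ne by (intro Max_in) auto
  then have Mpos: "Max (w ` N) > 0" using wpos by auto
  have vnn: "\<And>e. e \<in> {1..m} \<Longrightarrow> v a e \<ge> 0"
  proof -
    fix e assume "e \<in> {1..m}"
    then have "v a e = 0 \<or> (\<exists>p::nat. v a e = Max (w ` N) / 2 ^ p)" using c assms(2) by blast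
    then show "v a e \<ge> 0" using Mpos by auto
  qed
  have mono: "\<And>e. e \<in> {1..h} \<Longrightarrow> v a h \<le> v a e" using c assms(2,4) by auto
  define t where "t = gw N w r"
  have tW: "t \<in> w ` N" using gw_facts(1)[OF fin assms(3)] t_def by simp
  have tpos: "t > 0" using tW wpos by auto
  define F where "F = (\<lambda>f. Max ((\<lambda>b. cost v a (bundle_of m f b) / w b) ` N)) ` allocations N m"
  have finF: "finite F" unfolding F_def allocations_def using fin by (simp add: finite_PiE)
  have neF: "F \<noteq> {}" unfolding F_def allocations_def using ne by (simp add: PiE_eq_empty_iff)
  have "w a * Min F = w a" using c assms(2) unfolding WMMS_def F_def by blast
  then have "Min F = 1" using wpos[OF assms(2)] by simp
  then obtain f where f: "f \<in> allocations N m"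
    and fM: "Max ((\<lambda>b. cost v a (bundle_of m f b) / w b) ` N) = 1"
    using Min_in[OF finF neF] unfolding F_def by auto
  have bnd: "\<And>b. b \<in> N \<Longrightarrow> cost v a (bundle_of m f b) \<le> w b"
  proof -
    fix b assume b: "b \<in> N"
    have "cost v a (bundle_of m f b) / w b \<le> 1"
      using Max_ge[of "(\<lambda>b. cost v a (bundle_of m f b) / w b) ` N"] fin b fM by auto
    then show "cost v a (bundle_of m f b) \<le> w b" using wpos[OF b] by (simp add: field_simps)
  qed
  have hm: "h \<le> m" "1 \<le> h" using assms(4) by auto
  define B where "B = {b \<in> N. w b > t}"
  have fin_B: "finite B" unfolding B_def using fin by simp
  have fe: "\<And>e. e \<in> {1..h} \<Longrightarrow> f e \<in> B"
  proof -
    fix e assume e: "e \<in> {1..h}"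
    have em: "e \<in> {1..m}" using e hm by auto
    have fN: "f e \<in> N" using f em unfolding allocations_def by auto
    have "v a e \<le> cost v a (bundle_of m f (f e))"
      unfolding cost_def
      apply (rule member_le_sum)
      using em vnn by (auto simp: bundle_of_def)
    also have "\<dots> \<le> w (f e)" using bnd fN by simp
    finally have "v a e \<le> w (f e)" .
    moreover have "v a e > t" using mono[OF e] neg t_def by simp
    ultimately show "f e \<in> B" using fN B_def by auto
  qed
  have "real h * t < (\<Sum>e\<in>{1..h}. v a e)"
  proof -
    have "real h * t = (\<Sum>e\<in>{1..h}. t)" by simp
    also have "\<dots> < (\<Sum>e\<in>{1..h}. v a e)"
      apply (rule sum_strict_mono) using mono neg t_def hm by force+
    finally show ?thesis .
  qed
  also have "(\<Sum>e\<in>{1..h}. v a e) = (\<Sum>b\<in>B. \<Sum>e\<in>{e\<in>{1..h}. f e = b}. v a e)"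
    by (rule sum.group[symmetric]) (use fin_B fe in auto)
  also have "\<dots> \<le> (\<Sum>b\<in>B. w b)"
  proof (rule sum_mono)
    fix b assume b: "b \<in> B"
    have "(\<Sum>e\<in>{e\<in>{1..h}. f e = b}. v a e) \<le> cost v a (bundle_of m f b)"
      unfolding cost_def bundle_of_def
      apply (rule sum_mono2) using hm vnn by auto
    also have "\<dots> \<le> w b" using bnd b B_def by auto
    finally show "(\<Sum>e\<in>{e\<in>{1..h}. f e = b}. v a e) \<le> w b" .
  qed
  also have "(\<Sum>b\<in>B. w b) = (\<Sum>x\<in>{x \<in> w ` N. x > t}. \<Sum>b\<in>{b\<in>B. w b = x}. w b)"
    by (rule sum.group[symmetric]) (use fin_B fin in \<open>auto simp: B_def\<close>)
  also have "\<dots> = (\<Sum>x\<in>{x \<in> w ` N. x > t}. real (card {b\<in>N. w b = x}) * x)"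
  proof (rule sum.cong)
    fix x assume x: "x \<in> {x \<in> w ` N. x > t}"
    have "{b\<in>B. w b = x} = {b\<in>N. w b = x}" using x B_def by auto
    then show "(\<Sum>b\<in>{b\<in>B. w b = x}. w b) = real (card {b\<in>N. w b = x}) * x" by simp
  qed simp
  also have "\<dots> = (\<Sum>j<r. gW N w j)"
    unfolding t_def gw_facts(2)[OF fin assms(3)]
    by (subst sum.reindex[OF gw_facts(3)[OF fin assms(3)]]) (simp add: gW_def gsize_def)
  finally have lt: "real h * t < (\<Sum>j<r. gW N w j)" .
  show False
  proof (cases "r = 0")
    case True
    have "real h > 0" using hm by simp
    then have "real h * t > 0" using tpos by (rule mult_pos_pos)
    then show ?thesis using lt True by simp
  next
    case False
    then have "real h > (\<Sum>j<r. gW N w j) / t" using assms(5) t_def by (simp add: Lbound_def)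
    then have "real h * t > (\<Sum>j<r. gW N w j)" using tpos by (simp add: field_simps)
    then show ?thesis using lt by simp
  qed
qed

end
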